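(* Let $f,g\colon X\to Y$ and $f',g'\colon X'\to Y'$ be continuous maps, and assume that $X\times X'$ is a normal space. Then the maps $f\times f',\,g\times g'\colon X\times X'\to Y\times Y'$ satisfy $\mathrm{D}(f\times f',g\times g')\leq \mathrm{D}(f,g)+\mathrm{D}(f',g')$.
   Context: For continuous maps $f,g\colon X\to Y$, the homotopic distance $\mathrm{D}(f,g)$ is the least integer $n\geq 0$ such that there is an open cover $\{U_0,\dots,U_n\}$ of $X$ with $f|_{U_j}\simeq g|_{U_j}$ for all $j$; if no such cover exists, $\mathrm{D}(f,g)=\infty$. *)

theory Defs
  imports "HOL-Analysis.Analysis" "HOL-Library.Extended_Nat"
begin

definition homotopic_distance ::
  "'a topology \<Rightarrow> 'b topology \<Rightarrow> ('a \<Rightarrow> 'b) \<Rightarrow> ('a \<Rightarrow> 'b) \<Rightarrow> enat" where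
  "homotopic_distance X Y f g =
     Inf {enat n | n. \<exists>U :: nat \<Rightarrow> 'a set.
            (\<forall>j\<le>n. openin X (U j)) \<and>
            (\<Union>j\<le>n. U j) = topspace X \<and>
            (\<forall>j\<le>n. homotopic_with (\<lambda>_. True) (subtopology X (U j)) Y f g)}"

end

theory Submission
  imports Defs
begin

lemma openin_less:
  assumes "continuous_map Z euclideanreal F" "continuous_map Z euclideanreal G"
  shows "openin Z {p \<in> topspace Z. F p < G p}"
proof -
  have "openin Z {p \<in> topspace Z. (\<lambda>p. G p - F p) p \<in> {0<..}}"
    by (rule openin_continuous_map_preimage) (use assms in \<open>auto intro: continuous_intros\<close>)
  then show ?thesis by simp
qed

lemma cozero_step:
  assumes nZ: "normal_space Z" and op: "\<And>i. i \<le> n \<Longrightarrow> openin Z (P i)"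
    and cov: "topspace Z \<subseteq> (\<Union>i\<le>n. P i)"
  shows "k \<le> Suc n \<Longrightarrow> \<exists>\<phi>. (\<forall>i<k. continuous_map Z euclideanreal (\<phi> i) \<and>
            (\<forall>p\<in>topspace Z. 0 \<le> \<phi> i p \<and> (0 < \<phi> i p \<longrightarrow> p \<in> P i))) \<and>
          (\<forall>p\<in>topspace Z. (\<exists>i<k. 0 < \<phi> i p) \<or> (\<exists>i. k \<le> i \<and> i \<le> n \<and> p \<in> P i))"
proof (induction k)
  case 0
  show ?case using cov by (intro exI[of _ "\<lambda>_ _. 0"]) auto
next
  case (Suc k)
  then obtain \<phi> where ph: "\<forall>i<k. continuous_map Z euclideanreal (\<phi> i) \<and>
            (\<forall>p\<in>topspace Z. 0 \<le> \<phi> i p \<and> (0 < \<phi> i p \<longrightarrow> p \<in> P i))"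
    and cv: "\<forall>p\<in>topspace Z. (\<exists>i<k. 0 < \<phi> i p) \<or> (\<exists>i. k \<le> i \<and> i \<le> n \<and> p \<in> P i)"
    by auto
  have kn: "k \<le> n" using Suc.prems by simp
  define Ob where "Ob = (\<Union>i<k. {p \<in> topspace Z. \<phi> i p \<in> {0<..}}) \<union> (\<Union>i\<in>{k<..n}. P i)"
  have oO: "openin Z Ob"
    unfolding Ob_def
    apply (intro openin_Un openin_Union)
    using ph op by (auto intro!: openin_less[of Z "\<lambda>_. 0", simplified])
  have clF: "closedin Z (topspace Z - Ob)"
    using oO by (simp add: closedin_diff)
  have clT: "closedin Z (topspace Z - P k)"
    using op[OF kn] by (simp add: closedin_diff)
  have dj: "disjnt (topspace Z - P k) (topspace Z - Ob)"
  proof -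
    { fix p assume p: "p \<in> topspace Z" "p \<notin> P k" "p \<notin> Ob"
      have "(\<exists>i<k. 0 < \<phi> i p) \<or> (\<exists>i. k \<le> i \<and> i \<le> n \<and> p \<in> P i)"
        using cv p(1) by blast
      then have False
      proof
        assume "\<exists>i<k. 0 < \<phi> i p" then show False using p unfolding Ob_def by auto
      next
        assume "\<exists>i. k \<le> i \<and> i \<le> n \<and> p \<in> P i"
        then obtain i where i: "k \<le> i" "i \<le> n" "p \<in> P i" by auto
        show False
        proof (cases "i = k")
          case True then show False using i p by auto
        next
          case False then show False using i p unfolding Ob_def by auto
        qed
      qed }
    then show ?thesis by (auto simp: disjnt_def)
  qed
  obtain f :: "_ \<Rightarrow> real" where f: "continuous_map Z (top_of_set {0..1}) f" "f ` (topspace Z - P k) \<subseteq> {0}"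
     "f ` (topspace Z - Ob) \<subseteq> {1}"
    by (rule Urysohn_lemma[OF nZ clT clF dj, of 0 1]) auto
  have fc: "continuous_map Z euclideanreal f" and fr: "\<And>p. p \<in> topspace Z \<Longrightarrow> f p \<in> {0..1}"
    using f(1) unfolding continuous_map_in_subtopology by (auto simp: Pi_iff)
  show ?case
  proof (intro exI[of _ "\<phi>(k := f)"] conjI ballI allI impI)
    fix i assume "i < Suc k"
    then show "continuous_map Z euclideanreal ((\<phi>(k := f)) i)"
      using ph fc by (cases "i = k") auto
  next
    fix i p assume "i < Suc k" "p \<in> topspace Z"
    then show "0 \<le> (\<phi>(k := f)) i p"
      using ph fr by (cases "i = k") auto
  next
    fix i p assume i: "i < Suc k" and p: "p \<in> topspace Z" and pos: "0 < (\<phi>(k := f)) i p"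
    show "p \<in> P i"
    proof (cases "i = k")
      case True
      have "f p \<noteq> 0" using pos True by simp
      then show ?thesis using f(2) p True by blast
    next
      case False
      then show ?thesis using ph pos p i by (simp add: less_Suc_eq)
    qed
  next
    fix p assume p: "p \<in> topspace Z"
    show "(\<exists>i<Suc k. 0 < (\<phi>(k := f)) i p) \<or> (\<exists>i. Suc k \<le> i \<and> i \<le> n \<and> p \<in> P i)"
    proof (cases "p \<in> Ob")
      case True
      then consider "\<exists>i<k. 0 < \<phi> i p" | "\<exists>i. k < i \<and> i \<le> n \<and> p \<in> P i"
        unfolding Ob_def by fastforce
      then show ?thesis
      proof cases
        case 1
        then obtain i where "i < k" "0 < \<phi> i p" by blast
        then show ?thesis by (intro disjI1 exI[of _ i]) auto
      next
        case 2
        then show ?thesis by (auto simp: Suc_le_eq)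
      qed
    next
      case False
      then have "f p = 1" using f(3) p by auto
      then show ?thesis by (intro disjI1 exI[of _ k]) auto
    qed
  qed
qed

lemma cozero_cover:
  fixes n :: nat and P :: "nat \<Rightarrow> 'a set"
  assumes "normal_space Z" "\<And>i. i \<le> n \<Longrightarrow> openin Z (P i)"
    "topspace Z \<subseteq> (\<Union>i\<le>n. P i)"
  obtains \<phi> :: "nat \<Rightarrow> _ \<Rightarrow> real" where
    "\<And>i. i \<le> n \<Longrightarrow> continuous_map Z euclideanreal (\<phi> i)"
    "\<And>i p. i \<le> n \<Longrightarrow> p \<in> topspace Z \<Longrightarrow> 0 \<le> \<phi> i p"
    "\<And>i p. i \<le> n \<Longrightarrow> p \<in> topspace Z \<Longrightarrow> 0 < \<phi> i p \<Longrightarrow> p \<in> P i"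
    "\<And>p. p \<in> topspace Z \<Longrightarrow> \<exists>i\<le>n. 0 < \<phi> i p"
proof -
  obtain \<phi> :: "nat \<Rightarrow> _ \<Rightarrow> real" where
    ph: "\<forall>i<Suc n. continuous_map Z euclideanreal (\<phi> i) \<and>
            (\<forall>p\<in>topspace Z. 0 \<le> \<phi> i p \<and> (0 < \<phi> i p \<longrightarrow> p \<in> P i))"
    and cv: "\<forall>p\<in>topspace Z. (\<exists>i<Suc n. 0 < \<phi> i p) \<or> (\<exists>i. Suc n \<le> i \<and> i \<le> n \<and> p \<in> P i)"
    using cozero_step[OF assms, of "Suc n"] by blast
  show ?thesis
    by (rule that) (use ph cv in \<open>auto simp: less_Suc_eq_le\<close>)
qed

lemma product_cover:
  fixes n m :: nat and P Q :: "nat \<Rightarrow> 'a set"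
  assumes nZ: "normal_space Z"
    and opP: "\<And>i. i \<le> n \<Longrightarrow> openin Z (P i)" and covP: "topspace Z \<subseteq> (\<Union>i\<le>n. P i)"
    and opQ: "\<And>j. j \<le> m \<Longrightarrow> openin Z (Q j)" and covQ: "topspace Z \<subseteq> (\<Union>j\<le>m. Q j)"
  obtains W where "\<And>i j. i \<le> n \<Longrightarrow> j \<le> m \<Longrightarrow> openin Z (W i j)"
    "\<And>i j. i \<le> n \<Longrightarrow> j \<le> m \<Longrightarrow> W i j \<subseteq> P i \<inter> Q j"
    "\<And>i j i' j'. i \<le> n \<Longrightarrow> j \<le> m \<Longrightarrow> i' \<le> n \<Longrightarrow> j' \<le> m \<Longrightarrow> i + j = i' + j'
       \<Longrightarrow> (i,j) \<noteq> (i',j') \<Longrightarrow> disjnt (W i j) (W i' j')"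
    "topspace Z \<subseteq> (\<Union>i\<le>n. \<Union>j\<le>m. W i j)"
proof -
  obtain \<phi> :: "nat \<Rightarrow> _ \<Rightarrow> real" where
    phc: "\<And>i. i \<le> n \<Longrightarrow> continuous_map Z euclideanreal (\<phi> i)" and
    ph0: "\<And>i p. i \<le> n \<Longrightarrow> p \<in> topspace Z \<Longrightarrow> 0 \<le> \<phi> i p" and
    phP: "\<And>i p. i \<le> n \<Longrightarrow> p \<in> topspace Z \<Longrightarrow> 0 < \<phi> i p \<Longrightarrow> p \<in> P i" and
    phc': "\<And>p. p \<in> topspace Z \<Longrightarrow> \<exists>i\<le>n. 0 < \<phi> i p"
    using cozero_cover[OF nZ opP covP] by blast
  obtain \<psi> :: "nat \<Rightarrow> _ \<Rightarrow> real" where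
    psc: "\<And>i. i \<le> m \<Longrightarrow> continuous_map Z euclideanreal (\<psi> i)" and
    ps0: "\<And>i p. i \<le> m \<Longrightarrow> p \<in> topspace Z \<Longrightarrow> 0 \<le> \<psi> i p" and
    psQ: "\<And>i p. i \<le> m \<Longrightarrow> p \<in> topspace Z \<Longrightarrow> 0 < \<psi> i p \<Longrightarrow> p \<in> Q i" and
    psc': "\<And>p. p \<in> topspace Z \<Longrightarrow> \<exists>i\<le>m. 0 < \<psi> i p"
    using cozero_cover[OF nZ opQ covQ] by blast
  define a where "a i p = (\<Sum>l<i. \<phi> l p)" for i p
  define b where "b i p = (\<Sum>l<i. \<psi> l p)" for i p
  define W where "W i j = {p \<in> topspace Z. a i p < a (Suc i) p \<and> a i p < b (Suc j) p \<and>
      b j p < a (Suc i) p \<and> b j p < b (Suc j) p}" for i j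
  have ac: "continuous_map Z euclideanreal (a i)" if "i \<le> Suc n" for i
    unfolding a_def using that by (intro continuous_map_sum) (auto intro: phc)
  have bc: "continuous_map Z euclideanreal (b i)" if "i \<le> Suc m" for i
    unfolding b_def using that by (intro continuous_map_sum) (auto intro: psc)
  have amono: "a i p \<le> a i' p" if "i \<le> i'" "i' \<le> Suc n" "p \<in> topspace Z" for i i' p
    unfolding a_def using that by (intro sum_mono2) (auto intro: ph0)
  have bmono: "b i p \<le> b i' p" if "i \<le> i'" "i' \<le> Suc m" "p \<in> topspace Z" for i i' p
    unfolding b_def using that by (intro sum_mono2) (auto intro: ps0)
  show ?thesis
  proof
    fix i j assume True: "i \<le> n" "j \<le> m"
    show "openin Z (W i j)"
    proof -
      have "W i j = {p \<in> topspace Z. a i p < a (Suc i) p} \<inter> {p \<in> topspace Z. a i p < b (Suc j) p} \<inter>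
         {p \<in> topspace Z. b j p < a (Suc i) p} \<inter> {p \<in> topspace Z. b j p < b (Suc j) p}"
        unfolding W_def by auto
      then show ?thesis using True
        by (simp only:) (intro openin_Int openin_less ac bc; simp)
    qed
  next
    fix i j assume ij: "i \<le> n" "j \<le> m"
    show "W i j \<subseteq> P i \<inter> Q j"
    proof
      fix p assume p: "p \<in> W i j"
      then have pt: "p \<in> topspace Z" and "a i p < a (Suc i) p" "b j p < b (Suc j) p"
        unfolding W_def by auto
      then have "0 < \<phi> i p" "0 < \<psi> j p" unfolding a_def b_def by auto
      then show "p \<in> P i \<inter> Q j" using phP psQ ij pt by blast
    qed
  next
    have key: False if "i < i'" "i' \<le> n" "j \<le> m" "i + j = i' + j'" "p \<in> W i j" "p \<in> W i' j'"
      for i j i' j' p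
    proof -
      have pt: "p \<in> topspace Z" using that W_def by auto
      have "a (Suc i) p \<le> a i' p" using that pt by (intro amono) auto
      moreover have "b (Suc j') p \<le> b j p" using that pt by (intro bmono) auto
      ultimately show False using that unfolding W_def by auto
    qed
    fix i j i' j'
    assume "i \<le> n" "j \<le> m" "i' \<le> n" "j' \<le> m" "i + j = i' + j'" "(i,j) \<noteq> (i',j')"
    then have "i < i' \<or> i' < i" by auto
    then show "disjnt (W i j) (W i' j')"
      unfolding disjnt_def using key \<open>i \<le> n\<close> \<open>i' \<le> n\<close> \<open>j \<le> m\<close> \<open>j' \<le> m\<close> \<open>i + j = i' + j'\<close>
      by (metis disjoint_iff)
  next
    show "topspace Z \<subseteq> (\<Union>i\<le>n. \<Union>j\<le>m. W i j)"
    proof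
      fix p assume pt: "p \<in> topspace Z"
      obtain i0 where "i0 \<le> n" "0 < \<phi> i0 p" using phc' pt by blast
      then have A: "0 < a (Suc n) p" unfolding a_def
        by (intro sum_pos2[of _ i0]) (auto intro: ph0 pt)
      obtain j0 where "j0 \<le> m" "0 < \<psi> j0 p" using psc' pt by blast
      then have B: "0 < b (Suc m) p" unfolding b_def
        by (intro sum_pos2[of _ j0]) (auto intro: ps0 pt)
      define Fs where "Fs = (\<lambda>l. a l p) ` {..Suc n} \<union> (\<lambda>l. b l p) ` {..Suc m}"
      have "finite Fs" unfolding Fs_def by auto
      moreover have "infinite {0<..<min (a (Suc n) p) (b (Suc m) p)}"
        using A B by (intro infinite_Ioo) auto
      ultimately obtain s where s: "s \<in> {0<..<min (a (Suc n) p) (b (Suc m) p)}" "s \<notin> Fs"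
        using Diff_infinite_finite infinite_imp_nonempty by blast
      have s0: "0 < s" and sA: "s < a (Suc n) p" and sB: "s < b (Suc m) p" using s(1) by auto
      have sa: "a l p \<noteq> s" if "l \<le> Suc n" for l using s(2) that unfolding Fs_def by auto
      have sb: "b l p \<noteq> s" if "l \<le> Suc m" for l using s(2) that unfolding Fs_def by auto
      define i where "i = Max {l. l \<le> n \<and> a l p < s}"
      have fi: "finite {l. l \<le> n \<and> a l p < s}" by auto
      have ne: "0 \<in> {l. l \<le> n \<and> a l p < s}" using s0 by (simp add: a_def)
      have i1: "i \<le> n" "a i p < s" proof -
        have "i \<in> {l. l \<le> n \<and> a l p < s}" unfolding i_def using Max_in[OF fi] ne by blast
        then show "i \<le> n" "a i p < s" by auto
      qed
      have i2: "s < a (Suc i) p"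
      proof (cases "Suc i \<le> n")
        case True
        have "\<not> a (Suc i) p < s"
        proof
          assume "a (Suc i) p < s"
          then have "Suc i \<le> i" using Max_ge[OF fi, of "Suc i"] True by (simp add: i_def)
          then show False by simp
        qed
        then show ?thesis using sa[of "Suc i"] True by linarith
      next
        case False
        then have "Suc i = Suc n" using i1 by auto
        then show ?thesis using sA by simp
      qed
      define j where "j = Max {l. l \<le> m \<and> b l p < s}"
      have fj: "finite {l. l \<le> m \<and> b l p < s}" by auto
      have nej: "0 \<in> {l. l \<le> m \<and> b l p < s}" using s0 by (simp add: b_def)
      have j1: "j \<le> m" "b j p < s" proof -
        have "j \<in> {l. l \<le> m \<and> b l p < s}" unfolding j_def using Max_in[OF fj] nej by blast
        then show "j \<le> m" "b j p < s" by auto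
      qed
      have j2: "s < b (Suc j) p"
      proof (cases "Suc j \<le> m")
        case True
        have "\<not> b (Suc j) p < s"
        proof
          assume "b (Suc j) p < s"
          then have "Suc j \<le> j" using Max_ge[OF fj, of "Suc j"] True by (simp add: j_def)
          then show False by simp
        qed
        then show ?thesis using sb[of "Suc j"] True by linarith
      next
        case False
        then have "Suc j = Suc m" using j1 by auto
        then show ?thesis using sB by simp
      qed
      have "p \<in> W i j" unfolding W_def using pt i1 i2 j1 j2 by auto
      then show "p \<in> (\<Union>i\<le>n. \<Union>j\<le>m. W i j)" using i1 j1 by blast
    qed
  qed
qed

lemma homotopic_with_disjoint_Union:
  assumes op: "\<And>i. i \<in> I \<Longrightarrow> openin Z (T i)"
    and dj: "\<And>i j. i \<in> I \<Longrightarrow> j \<in> I \<Longrightarrow> i \<noteq> j \<Longrightarrow> disjnt (T i) (T j)"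
    and hom: "\<And>i. i \<in> I \<Longrightarrow> homotopic_with (\<lambda>_. True) (subtopology Z (T i)) Y f g"
  shows "homotopic_with (\<lambda>_. True) (subtopology Z (\<Union>i\<in>I. T i)) Y f g"
proof -
  define W where "W = (\<Union>i\<in>I. T i)"
  have "\<forall>i\<in>I. \<exists>h. continuous_map (prod_topology (top_of_set {0..1::real}) (subtopology Z (T i))) Y h \<and>
              (\<forall>x \<in> topspace (subtopology Z (T i)). h(0,x) = f x) \<and>
              (\<forall>x \<in> topspace (subtopology Z (T i)). h(1,x) = g x)"
    using hom by (subst (asm) homotopic_with) auto
  then obtain h where hc: "\<And>i. i \<in> I \<Longrightarrow> continuous_map (prod_topology (top_of_set {0..1::real}) (subtopology Z (T i))) Y (h i)"
    and h0: "\<And>i x. i \<in> I \<Longrightarrow> x \<in> topspace (subtopology Z (T i)) \<Longrightarrow> h i (0,x) = f x"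
    and h1: "\<And>i x. i \<in> I \<Longrightarrow> x \<in> topspace (subtopology Z (T i)) \<Longrightarrow> h i (1,x) = g x"
    by metis
  let ?X = "prod_topology (top_of_set {0..1::real}) (subtopology Z W)"
  have sub: "T i \<subseteq> W" if "i \<in> I" for i using that W_def by auto
  obtain G where G: "continuous_map ?X Y G"
    and Gh: "\<And>x i. i \<in> I \<Longrightarrow> x \<in> topspace ?X \<inter> ({0..1} \<times> T i) \<Longrightarrow> G x = h i x"
  proof (rule pasting_lemma_exists[where X="?X" and I=I and T="\<lambda>i. {0..1} \<times> T i" and Y=Y and f=h])
    show "topspace ?X \<subseteq> (\<Union>i\<in>I. {0..1} \<times> T i)"
      by (auto simp: W_def)
  next
    fix i assume i: "i \<in> I"
    show "openin ?X ({0..1} \<times> T i)"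
      unfolding openin_prod_Times_iff openin_subtopology
      using op[OF i] sub[OF i] by (auto intro!: exI[of _ "T i"])
  next
    fix i assume i: "i \<in> I"
    have "subtopology ?X ({0..1} \<times> T i) = prod_topology (top_of_set {0..1}) (subtopology Z (T i))"
      using sub[OF i] by (simp add: subtopology_Times subtopology_subtopology Int_absorb1 Int_absorb2)
    then show "continuous_map (subtopology ?X ({0..1} \<times> T i)) Y (h i)"
      using hc[OF i] by simp
  next
    fix i j x assume "i \<in> I" "j \<in> I" "x \<in> topspace ?X \<inter> ({0..1} \<times> T i) \<inter> ({0..1} \<times> T j)"
    then show "h i x = h j x" using dj[of i j] by (cases "i = j") (auto simp: disjnt_def)
  qed auto
  have "homotopic_with (\<lambda>_. True) (subtopology Z W) Y f g"
  proof (subst homotopic_with, simp, intro exI conjI ballI)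
    show "continuous_map ?X Y G" by (rule G)
  next
    fix x assume "x \<in> topspace (subtopology Z W)"
    then obtain i where i: "i \<in> I" "x \<in> T i" "x \<in> topspace Z" by (auto simp: W_def)
    then show "G (0, x) = f x" using Gh[of i "(0,x)"] h0[of i x] sub[OF i(1)] by auto
  next
    fix x assume "x \<in> topspace (subtopology Z W)"
    then obtain i where i: "i \<in> I" "x \<in> T i" "x \<in> topspace Z" by (auto simp: W_def)
    then show "G (1, x) = g x" using Gh[of i "(1,x)"] h1[of i x] sub[OF i(1)] by auto
  qed auto
  then show ?thesis by (simp add: W_def)
qed

lemma homotopic_with_restrict:
  assumes "homotopic_with (\<lambda>_. True) (subtopology Z S) Y f g" "T \<subseteq> S"
  shows "homotopic_with (\<lambda>_. True) (subtopology Z T) Y f g"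
proof -
  have "continuous_map (subtopology Z T) (subtopology Z S) id"
    using assms(2) by (auto simp: continuous_map_in_subtopology continuous_map_from_subtopology)
  from homotopic_with_compose_continuous_map_right[OF assms(1) this, of "\<lambda>_. True"]
  show ?thesis by simp
qed

lemma enat_Inf_in: "(A::enat set) \<noteq> {} \<Longrightarrow> Inf A \<in> A"
  unfolding Inf_enat_def by (auto intro: LeastI)

lemma hd_witness:
  assumes "homotopic_distance X Y f g = enat n"
  shows "\<exists>U :: nat \<Rightarrow> 'a set. (\<forall>j\<le>n. openin X (U j)) \<and> (\<Union>j\<le>n. U j) = topspace X \<and>
            (\<forall>j\<le>n. homotopic_with (\<lambda>_. True) (subtopology X (U j)) Y f g)"
proof -
  let ?S = "{enat n | n. \<exists>U :: nat \<Rightarrow> 'a set.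
            (\<forall>j\<le>n. openin X (U j)) \<and>
            (\<Union>j\<le>n. U j) = topspace X \<and>
            (\<forall>j\<le>n. homotopic_with (\<lambda>_. True) (subtopology X (U j)) Y f g)}"
  have eq: "Inf ?S = enat n" using assms unfolding homotopic_distance_def by simp
  have "?S \<noteq> {}"
  proof
    assume "?S = {}"
    with eq show False by (simp add: top_enat_def)
  qed
  then have "Inf ?S \<in> ?S" by (rule enat_Inf_in)
  then show ?thesis using eq by auto
qed

lemma hd_le:
  assumes "\<forall>j\<le>n. openin X (U j)" "(\<Union>j\<le>n. U j) = topspace X"
    "\<forall>j\<le>n. homotopic_with (\<lambda>_. True) (subtopology X (U j)) Y f g"
  shows "homotopic_distance X Y f g \<le> enat n"
  unfolding homotopic_distance_def using assms by (intro Inf_lower) blast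

theorem theorem3p20:
  fixes X :: "'a topology" and Y :: "'b topology"
    and X' :: "'c topology" and Y' :: "'d topology"
    and f g :: "'a \<Rightarrow> 'b" and f' g' :: "'c \<Rightarrow> 'd"
  assumes "continuous_map X Y f" and "continuous_map X Y g"
    and "continuous_map X' Y' f'" and "continuous_map X' Y' g'"
    and "normal_space (prod_topology X X')"
  shows "homotopic_distance (prod_topology X X') (prod_topology Y Y')
           (\<lambda>(x, x'). (f x, f' x')) (\<lambda>(x, x'). (g x, g' x'))
         \<le> homotopic_distance X Y f g + homotopic_distance X' Y' f' g'"
proof (cases "homotopic_distance X Y f g = \<infinity> \<or> homotopic_distance X' Y' f' g' = \<infinity>")
  case True
  then show ?thesis by auto
next
  case False
  then obtain n m where n: "homotopic_distance X Y f g = enat n"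
    and m: "homotopic_distance X' Y' f' g' = enat m" by auto
  obtain U where Uo: "\<forall>j\<le>n. openin X (U j)" and Uc: "(\<Union>j\<le>n. U j) = topspace X"
    and Uh: "\<forall>j\<le>n. homotopic_with (\<lambda>_. True) (subtopology X (U j)) Y f g"
    using hd_witness[OF n] by blast
  obtain V where Vo: "\<forall>j\<le>m. openin X' (V j)" and Vc: "(\<Union>j\<le>m. V j) = topspace X'"
    and Vh: "\<forall>j\<le>m. homotopic_with (\<lambda>_. True) (subtopology X' (V j)) Y' f' g'"
    using hd_witness[OF m] by blast
  let ?Z = "prod_topology X X'"
  define P where "P i = U i \<times> topspace X'" for i
  define Q where "Q j = topspace X \<times> V j" for j
  have Po: "openin ?Z (P i)" if "i \<le> n" for i
    unfolding P_def using Uo that by (simp add: openin_prod_Times_iff)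
  have Qo: "openin ?Z (Q j)" if "j \<le> m" for j
    unfolding Q_def using Vo that by (simp add: openin_prod_Times_iff)
  have Pc: "topspace ?Z \<subseteq> (\<Union>i\<le>n. P i)" unfolding P_def using Uc by auto
  have Qc: "topspace ?Z \<subseteq> (\<Union>j\<le>m. Q j)" unfolding Q_def using Vc by auto
  obtain W where Wo: "\<And>i j. i \<le> n \<Longrightarrow> j \<le> m \<Longrightarrow> openin ?Z (W i j)"
    and Ws: "\<And>i j. i \<le> n \<Longrightarrow> j \<le> m \<Longrightarrow> W i j \<subseteq> P i \<inter> Q j"
    and Wd: "\<And>i j i' j'. i \<le> n \<Longrightarrow> j \<le> m \<Longrightarrow> i' \<le> n \<Longrightarrow> j' \<le> m \<Longrightarrow> i + j = i' + j'
       \<Longrightarrow> (i,j) \<noteq> (i',j') \<Longrightarrow> disjnt (W i j) (W i' j')"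
    and Wc: "topspace ?Z \<subseteq> (\<Union>i\<le>n. \<Union>j\<le>m. W i j)"
    using product_cover[OF assms(5) Po Pc Qo Qc] by blast
  define I where "I k = {(i,j). i \<le> n \<and> j \<le> m \<and> i + j = k}" for k
  define W' where "W' k = (\<Union>(i,j)\<in>I k. W i j)" for k
  have Wh: "homotopic_with (\<lambda>_. True) (subtopology ?Z (W i j)) (prod_topology Y Y')
           (\<lambda>(x, x'). (f x, f' x')) (\<lambda>(x, x'). (g x, g' x'))" if "i \<le> n" "j \<le> m" for i j
  proof -
    have "homotopic_with (\<lambda>_. True) (prod_topology (subtopology X (U i)) (subtopology X' (V j)))
       (prod_topology Y Y') (\<lambda>z. (f (fst z), f' (snd z))) (\<lambda>z. (g (fst z), g' (snd z)))"
      using Uh Vh that by (intro homotopic_with_prod_topology) auto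
    then have "homotopic_with (\<lambda>_. True) (subtopology ?Z (U i \<times> V j))
       (prod_topology Y Y') (\<lambda>(x, x'). (f x, f' x')) (\<lambda>(x, x'). (g x, g' x'))"
      by (simp add: subtopology_Times case_prod_beta')
    moreover have "W i j \<subseteq> U i \<times> V j" using Ws[OF that] unfolding P_def Q_def by auto
    ultimately show ?thesis by (rule homotopic_with_restrict)
  qed
  have "homotopic_distance ?Z (prod_topology Y Y')
           (\<lambda>(x, x'). (f x, f' x')) (\<lambda>(x, x'). (g x, g' x')) \<le> enat (n + m)"
  proof (rule hd_le[where U = W'], intro allI impI)
    fix k assume "k \<le> n + m"
    show "openin ?Z (W' k)" unfolding W'_def I_def
      by (intro openin_Union) (auto intro: Wo)
  next
    show "(\<Union>k\<le>n + m. W' k) = topspace ?Z"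
    proof
      have "W i j \<subseteq> topspace ?Z" if "i \<le> n" "j \<le> m" for i j
        using openin_subset[OF Wo[OF that]] .
      then show "(\<Union>k\<le>n + m. W' k) \<subseteq> topspace ?Z"
        unfolding W'_def I_def by (fastforce simp del: topspace_prod_topology)
      show "topspace ?Z \<subseteq> (\<Union>k\<le>n + m. W' k)"
        unfolding W'_def I_def using Wc by fastforce
    qed
  next
    show "\<forall>k\<le>n + m. homotopic_with (\<lambda>_. True) (subtopology ?Z (W' k)) (prod_topology Y Y')
           (\<lambda>(x, x'). (f x, f' x')) (\<lambda>(x, x'). (g x, g' x'))"
    proof (intro allI impI)
      fix k
      show "homotopic_with (\<lambda>_. True) (subtopology ?Z (W' k)) (prod_topology Y Y')
           (\<lambda>(x, x'). (f x, f' x')) (\<lambda>(x, x'). (g x, g' x'))"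
        unfolding W'_def
      proof (rule homotopic_with_disjoint_Union)
        fix ij assume "ij \<in> I k"
        then show "openin ?Z (case ij of (i, j) \<Rightarrow> W i j)" unfolding I_def by (auto intro: Wo)
      next
        fix ij ij' assume a: "ij \<in> I k" "ij' \<in> I k" "ij \<noteq> ij'"
        obtain i j where ij: "ij = (i,j)" by fastforce
        obtain i' j' where ij': "ij' = (i',j')" by fastforce
        show "disjnt (case ij of (i, j) \<Rightarrow> W i j) (case ij' of (i, j) \<Rightarrow> W i j)"
          using a Wd[of i j i' j'] unfolding I_def ij ij' by auto
      next
        fix ij assume "ij \<in> I k"
        then show "homotopic_with (\<lambda>_. True) (subtopology ?Z (case ij of (i, j) \<Rightarrow> W i j)) (prod_topology Y Y')
           (\<lambda>(x, x'). (f x, f' x')) (\<lambda>(x, x'). (g x, g' x'))"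
          unfolding I_def using Wh by auto
      qed
    qed
  qed
  then show ?thesis using n m by simp
qed

end
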